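(* Let $R$ be a Noetherian ring and $\Gamma$ a finitely generated group with a word metric. Let $\phi\colon F\to F'$ be an $R[\Gamma]$-homomorphism between finitely generated $R[\Gamma]$-modules, and let $\Sigma_F$, $\Sigma_{F'}$ be arbitrary finite generating sets of $F$ and $F'$. Then $\phi$ is boundedly controlled as an $R$-linear homomorphism of $\Gamma$-filtered $R$-modules $s(F,\Sigma_F)\to s(F',\Sigma_{F'})$.
   Context: For a subset $S\subset\Gamma$ and $b\ge0$, $S[b]$ is the metric $b$-enlargement of $S$ in the word metric. A $\Gamma$-filtered $R$-module is an $R$-module $F$ with an inclusion-preserving assignment $S\mapsto F(S)$ of $R$-submodules to subsets $S\subset\Gamma$ with $F(\Gamma)=F$. For a finitely generated $R[\Gamma]$-module $F$ with finite generating set $\Sigma$, $s(F,\Sigma)$ is the $\Gamma$-filtered $R$-module with $F(S)$ the $R$-submodule generated by $\{s\sigma : s\in S,\ \sigma\in\Sigma\}$. An $R$-homomorphism $f\colon F\to F'$ of filtered modules is boundedly controlled if there is $b\ge 0$ with $f(F(S))\subset F'(S[b])$ for all $S\subset\Gamma$. *)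

theory Defs
  imports Complex_Main HOL.Modules "HOL-Algebra.Generated_Groups"
begin

text \<open>A commutative ring is Noetherian if every ideal is finitely generated.
  Ideals of the ring 'r are the submodules of 'r over itself.\<close>
definition noetherian_ring :: "'r::comm_ring_1 itself \<Rightarrow> bool" where
  "noetherian_ring _ \<longleftrightarrow>
     (\<forall>I::'r set. Modules.module.subspace ((*)::'r \<Rightarrow> 'r \<Rightarrow> 'r) I \<longrightarrow>
        (\<exists>B. finite B \<and> Modules.module.span ((*)::'r \<Rightarrow> 'r \<Rightarrow> 'r) B = I))"

definition word_length :: "('g, 'b) monoid_scheme \<Rightarrow> 'g set \<Rightarrow> 'g \<Rightarrow> nat" where
  "word_length G A g = (LEAST n. \<exists>ws. length ws = n \<and>
      set ws \<subseteq> A \<union> m_inv G ` A \<and> g = foldr (mult G) ws (one G))"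

definition word_dist :: "('g, 'b) monoid_scheme \<Rightarrow> 'g set \<Rightarrow> 'g \<Rightarrow> 'g \<Rightarrow> nat" where
  "word_dist G A g h = word_length G A (mult G (m_inv G g) h)"

definition enlarge :: "('g, 'b) monoid_scheme \<Rightarrow> 'g set \<Rightarrow> 'g set \<Rightarrow> real \<Rightarrow> 'g set" where
  "enlarge G A S b = {h \<in> carrier G. \<exists>s\<in>S. real (word_dist G A s h) \<le> b}"

text \<open>An R[Gamma]-module: an R-module with a Gamma-action by R-linear maps.\<close>
definition group_ring_module ::
  "('g, 'b) monoid_scheme \<Rightarrow> ('r::comm_ring_1 \<Rightarrow> 'm::ab_group_add \<Rightarrow> 'm) \<Rightarrow> ('g \<Rightarrow> 'm \<Rightarrow> 'm) \<Rightarrow> bool" where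
  "group_ring_module G scale act \<longleftrightarrow>
     Modules.module scale \<and>
     (\<forall>x. act (one G) x = x) \<and>
     (\<forall>g\<in>carrier G. \<forall>h\<in>carrier G. \<forall>x. act (mult G g h) x = act g (act h x)) \<and>
     (\<forall>g\<in>carrier G. \<forall>x y. act g (x + y) = act g x + act g y) \<and>
     (\<forall>g\<in>carrier G. \<forall>r x. act g (scale r x) = scale r (act g x))"

definition group_ring_hom ::
  "('g, 'b) monoid_scheme \<Rightarrow> ('r::comm_ring_1 \<Rightarrow> 'm::ab_group_add \<Rightarrow> 'm) \<Rightarrow> ('g \<Rightarrow> 'm \<Rightarrow> 'm)
     \<Rightarrow> ('r \<Rightarrow> 'n::ab_group_add \<Rightarrow> 'n) \<Rightarrow> ('g \<Rightarrow> 'n \<Rightarrow> 'n) \<Rightarrow> ('m \<Rightarrow> 'n) \<Rightarrow> bool" where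
  "group_ring_hom G scale act scale' act' f \<longleftrightarrow>
     (\<forall>x y. f (x + y) = f x + f y) \<and>
     (\<forall>r x. f (scale r x) = scale' r (f x)) \<and>
     (\<forall>g\<in>carrier G. \<forall>x. f (act g x) = act' g (f x))"

text \<open>The Gamma-filtered R-module s(F,Sigma): F(S) is the R-submodule generated by
  s sigma with s in S and sigma in Sigma.\<close>
definition std_filtration ::
  "('g, 'b) monoid_scheme \<Rightarrow> ('r::comm_ring_1 \<Rightarrow> 'm::ab_group_add \<Rightarrow> 'm) \<Rightarrow> ('g \<Rightarrow> 'm \<Rightarrow> 'm)
     \<Rightarrow> 'm set \<Rightarrow> 'g set \<Rightarrow> 'm set" where
  "std_filtration G scale act \<Sigma> S =
     Modules.module.span scale {act s \<sigma> | s \<sigma>. s \<in> S \<and> s \<in> carrier G \<and> \<sigma> \<in> \<Sigma>}"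

definition boundedly_controlled ::
  "('g, 'b) monoid_scheme \<Rightarrow> 'g set \<Rightarrow> ('g set \<Rightarrow> 'm set) \<Rightarrow> ('g set \<Rightarrow> 'n set) \<Rightarrow> ('m \<Rightarrow> 'n) \<Rightarrow> bool" where
  "boundedly_controlled G A F F' f \<longleftrightarrow>
     (\<exists>b::real. b \<ge> 0 \<and> (\<forall>S. S \<subseteq> carrier G \<longrightarrow> f ` F S \<subseteq> F' (enlarge G A S b)))"

end

theory Submission
  imports Defs
begin

lemma word_dist_mult:
  assumes "group G" "s \<in> carrier G" "g \<in> carrier G"
  shows "word_dist G A s (mult G s g) = word_length G A g"
proof -
  interpret group G by fact
  have "mult G (m_inv G s) (mult G s g) = g" using assms(2,3) by (simp add: m_assoc[symmetric])
  thus ?thesis by (simp add: word_dist_def)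
qed

theorem lemma2p4:
  fixes G :: "('g, 'b) monoid_scheme" and A :: "'g set"
    and scale :: "'r::comm_ring_1 \<Rightarrow> 'm::ab_group_add \<Rightarrow> 'm" and act :: "'g \<Rightarrow> 'm \<Rightarrow> 'm"
    and scale' :: "'r \<Rightarrow> 'n::ab_group_add \<Rightarrow> 'n" and act' :: "'g \<Rightarrow> 'n \<Rightarrow> 'n"
    and \<phi> :: "'m \<Rightarrow> 'n" and \<Sigma>F :: "'m set" and \<Sigma>F' :: "'n set"
  assumes "noetherian_ring TYPE('r)"
    and "group G" and "finite A" and "A \<subseteq> carrier G" and "generate G A = carrier G"
    and "group_ring_module G scale act" and "group_ring_module G scale' act'"
    and "group_ring_hom G scale act scale' act' \<phi>"
    and "finite \<Sigma>F" and "std_filtration G scale act \<Sigma>F (carrier G) = UNIV"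
    and "finite \<Sigma>F'" and "std_filtration G scale' act' \<Sigma>F' (carrier G) = UNIV"
  shows "boundedly_controlled G A (std_filtration G scale act \<Sigma>F)
           (std_filtration G scale' act' \<Sigma>F') \<phi>"
proof -
  interpret M: module scale using assms(6) by (simp add: group_ring_module_def)
  interpret M': module scale' using assms(7) by (simp add: group_ring_module_def)
  interpret H: module_hom scale scale' \<phi>
    using assms(6,7,8) by (simp add: module_hom_iff group_ring_module_def group_ring_hom_def)
  have actH: "module_hom scale' scale' (act' s)" if "s \<in> carrier G" for s
    using assms(7) that by (simp add: module_hom_iff group_ring_module_def)
  define Gen where "Gen = {act' s \<sigma> | s \<sigma>. s \<in> carrier G \<and> s \<in> carrier G \<and> \<sigma> \<in> \<Sigma>F'}"
  have spanGen: "M'.span Gen = UNIV" using assms(12) by (simp add: std_filtration_def Gen_def)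
  have "\<forall>\<sigma>\<in>\<Sigma>F. \<exists>t. finite t \<and> t \<subseteq> Gen \<and> \<phi> \<sigma> \<in> M'.span t"
  proof
    fix \<sigma> assume "\<sigma> \<in> \<Sigma>F"
    have "\<phi> \<sigma> \<in> M'.span Gen" using spanGen by simp
    then obtain t r where t: "finite t" "t \<subseteq> Gen" "\<phi> \<sigma> = (\<Sum>a\<in>t. scale' (r a) a)"
      unfolding M'.span_explicit by blast
    have "\<phi> \<sigma> \<in> M'.span t" unfolding t(3)
      by (intro M'.span_sum M'.span_scale M'.span_base)
    with t show "\<exists>t. finite t \<and> t \<subseteq> Gen \<and> \<phi> \<sigma> \<in> M'.span t" by blast
  qed
  then obtain T where T: "\<And>\<sigma>. \<sigma> \<in> \<Sigma>F \<Longrightarrow> finite (T \<sigma>) \<and> T \<sigma> \<subseteq> Gen \<and> \<phi> \<sigma> \<in> M'.span (T \<sigma>)"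
    by metis
  define B where "B = (\<Union>\<sigma>\<in>\<Sigma>F. T \<sigma>)"
  have finB: "finite B" using T assms(9) by (auto simp: B_def)
  have BGen: "B \<subseteq> Gen" using T by (auto simp: B_def)
  have phiB: "\<phi> \<sigma> \<in> M'.span B" if "\<sigma> \<in> \<Sigma>F" for \<sigma>
    using T[OF that] M'.span_mono[of "T \<sigma>" B] that by (auto simp: B_def)
  have "\<forall>y\<in>B. \<exists>p. fst p \<in> carrier G \<and> snd p \<in> \<Sigma>F' \<and> y = act' (fst p) (snd p)"
    using BGen unfolding Gen_def by fastforce
  then obtain P where P: "\<And>y. y \<in> B \<Longrightarrow> fst (P y) \<in> carrier G \<and> snd (P y) \<in> \<Sigma>F' \<and> y = act' (fst (P y)) (snd (P y))"
    by metis
  define b where "b = real (Max (insert 0 ((\<lambda>y. word_length G A (fst (P y))) ` B)))"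
  have lenb: "real (word_length G A (fst (P y))) \<le> b" if "y \<in> B" for y
    unfolding b_def using finB that by (auto intro: Max_ge)
  show ?thesis unfolding boundedly_controlled_def
  proof (intro exI[of _ b] conjI allI impI)
    show "0 \<le> b" by (simp add: b_def)
    fix S assume S: "S \<subseteq> carrier G"
    define X where "X = {act s \<sigma> | s \<sigma>. s \<in> S \<and> s \<in> carrier G \<and> \<sigma> \<in> \<Sigma>F}"
    define Y where "Y = {act' s \<sigma> | s \<sigma>. s \<in> enlarge G A S b \<and> s \<in> carrier G \<and> \<sigma> \<in> \<Sigma>F'}"
    have "\<phi> ` X \<subseteq> M'.span Y"
    proof
      fix z assume "z \<in> \<phi> ` X"
      then obtain s \<sigma> where s: "s \<in> S" "s \<in> carrier G" "\<sigma> \<in> \<Sigma>F" and z: "z = \<phi> (act s \<sigma>)"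
        by (auto simp: X_def)
      have z2: "z = act' s (\<phi> \<sigma>)" using z s assms(8) by (simp add: group_ring_hom_def)
      interpret AS: module_hom scale' scale' "act' s" using actH s(2) .
      have sub: "act' s ` B \<subseteq> Y"
      proof
        fix w assume "w \<in> act' s ` B"
        then obtain y where y: "y \<in> B" "w = act' s y" by auto
        let ?g = "fst (P y)" and ?t = "snd (P y)"
        have g: "?g \<in> carrier G" "?t \<in> \<Sigma>F'" "y = act' ?g ?t" using P[OF y(1)] by auto
        have w: "w = act' (mult G s ?g) ?t"
          using assms(7) s(2) g y(2) by (simp add: group_ring_module_def)
        have mc: "mult G s ?g \<in> carrier G" using assms(2) s(2) g(1) by (simp add: group.subgroup_self subgroup.m_closed)
        have "real (word_dist G A s (mult G s ?g)) \<le> b"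
          using word_dist_mult[OF assms(2) s(2) g(1)] lenb[OF y(1)] by simp
        hence "mult G s ?g \<in> enlarge G A S b" using mc s(1) by (auto simp: enlarge_def)
        thus "w \<in> Y" using w mc g(2) by (auto simp: Y_def)
      qed
      have "z \<in> act' s ` M'.span B" using z2 phiB[OF s(3)] by auto
      also have "\<dots> = M'.span (act' s ` B)" by (simp add: AS.span_image)
      also have "\<dots> \<subseteq> M'.span Y" using sub by (rule M'.span_mono)
      finally show "z \<in> M'.span Y" .
    qed
    hence "M'.span (\<phi> ` X) \<subseteq> M'.span Y" by (simp add: M'.span_minimal)
    thus "\<phi> ` std_filtration G scale act \<Sigma>F S \<subseteq> std_filtration G scale' act' \<Sigma>F' (enlarge G A S b)"
      by (simp add: std_filtration_def X_def Y_def H.span_image)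
  qed
qed

end
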